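(* Let $A$ be an $m\times n$ matrix with columns $a_1,\dots,a_n$. Then $A$ is optimally sparse if and only if for every nonzero vector $x\in\mathbb{Q}^n$, $\|Ax\|_0\ge \max_{i\in\operatorname{supp}(x)}\|a_i\|_0$.
   Context: $\|v\|_0$ is the number of nonzero entries of a vector $v$; $\operatorname{supp}(x)=\{i: x_i\neq 0\}$; $\operatorname{nnz}(M)$ is the number of nonzero entries of a matrix $M$. $A$ is optimally sparse if $\operatorname{nnz}(AX)\ge\operatorname{nnz}(A)$ for every invertible $n\times n$ matrix $X$. *)

theory Defs
  imports "HOL-Analysis.Analysis"
begin

definition vnnz :: "'a::zero ^ 'n \<Rightarrow> nat" where
  "vnnz v = card {i. v $ i \<noteq> 0}"

definition supp :: "'a::zero ^ 'n \<Rightarrow> 'n set" where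
  "supp x = {i. x $ i \<noteq> 0}"

definition nnz :: "'a::zero ^ 'n ^ 'm \<Rightarrow> nat" where
  "nnz M = card {(i, j). M $ i $ j \<noteq> 0}"

definition optimally_sparse :: "rat ^ 'n ^ 'm \<Rightarrow> bool" where
  "optimally_sparse A \<longleftrightarrow>
     (\<forall>X :: rat ^ 'n ^ 'n. invertible X \<longrightarrow> nnz (A ** X) \<ge> nnz A)"

end

theory Submission imports Defs begin
lemma col_mult: "column j (A ** X) = A *v column j X"
  by (simp add: column_def matrix_matrix_mult_def matrix_vector_mult_def vec_eq_iff)

lemma nnz_cols: "nnz (M::'a::zero^'n^'m) = (\<Sum>j\<in>UNIV. vnnz (column j M))"
proof -
  have "{(i, j). M $ i $ j \<noteq> 0} = (\<Union>j\<in>UNIV. (\<lambda>i. (i,j)) ` {i. M$i$j \<noteq> 0})" by auto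
  hence "nnz M = (\<Sum>j\<in>UNIV. card ((\<lambda>i. (i,j)) ` {i. M$i$j \<noteq> 0}))"
    unfolding nnz_def by (simp, subst card_UN_disjoint, auto)
  also have "\<dots> = (\<Sum>j\<in>UNIV. vnnz (column j M))"
    by (rule sum.cong, simp, subst card_image, auto simp: inj_on_def vnnz_def column_def)
  finally show ?thesis .
qed

lemma det_perm: assumes "det (X::'a::comm_ring_1^'n^'n) \<noteq> 0"
  shows "\<exists>p. p permutes UNIV \<and> (\<forall>i. X$i$p i \<noteq> 0)"
proof (rule ccontr)
  assume na: "\<not> ?thesis"
  have "\<forall>p\<in>{p. p permutes (UNIV::'n set)}. of_int (sign p) * prod (\<lambda>i. X$i$p i) UNIV = (0::'a)"
  proof
    fix p assume "p \<in> {p. p permutes (UNIV::'n set)}"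
    then obtain i where "X$i$p i = 0" using na by auto
    then have "prod (\<lambda>i. X$i$p i) UNIV = 0" by (intro prod_zero) auto
    then show "of_int (sign p) * prod (\<lambda>i. X$i$p i) UNIV = (0::'a)" by simp
  qed
  hence "det X = 0" unfolding det_def by (simp add: sum.neutral)
  with assms show False by simp
qed

lemma inj0: "inj ((*v) (M::'a::field^'n^'n)) \<longleftrightarrow> (\<forall>v. M *v v = 0 \<longrightarrow> v = 0)"
  by (metis vec.inj_iff_eq_0 matrix_vector_mul_linear_gen) 

lemma axis_col: "(A::'a::comm_semiring_1^'n^'m) *v axis j 1 = column j A"
  by (simp add: matrix_vector_mult_def axis_def column_def vec_eq_iff if_distrib cong: if_cong)

lemma Xcomp:
  fixes x v :: "'a::comm_ring_1^'n"
  shows "((\<chi> i j. if j = k then x$i else if i = j then 1 else 0) *v v) $ i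
     = x$i * v$k + (if i = k then 0 else v$i)"
proof -
  have "((\<chi> i j. if j = k then x$i else if i = j then 1 else 0) *v v) $ i
     = (\<Sum>j\<in>UNIV. (if j = k then x$i * v$k else 0) + (if j = i then (if i = k then 0 else v$i) else 0))"
    apply (simp only: matrix_vector_mult_def vec_lambda_beta)
    apply (rule sum.cong)
    apply auto
    done
  also have "\<dots> = x$i * v$k + (if i = k then 0 else v$i)"
    by (simp add: sum.distrib)
  finally show ?thesis .
qed

theorem mainTheorem5:
  fixes A :: "rat ^ 'n ^ 'm"
  shows "optimally_sparse A \<longleftrightarrow>
    (\<forall>x :: rat ^ 'n. x \<noteq> 0 \<longrightarrow>
       vnnz (A *v x) \<ge> Max ((\<lambda>i. vnnz (column i A)) ` supp x))"
proof
  assume os: "optimally_sparse A"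
  show "\<forall>x :: rat ^ 'n. x \<noteq> 0 \<longrightarrow>
       vnnz (A *v x) \<ge> Max ((\<lambda>i. vnnz (column i A)) ` supp x)"
  proof (intro allI impI)
    fix x :: "rat^'n" assume "x \<noteq> 0"
    then have ne: "supp x \<noteq> {}" by (auto simp: supp_def vec_eq_iff)
    have "Max ((\<lambda>i. vnnz (column i A)) ` supp x) \<in> (\<lambda>i. vnnz (column i A)) ` supp x"
      using ne by (intro Max_in) auto
    then obtain k where k: "k \<in> supp x" and kM: "Max ((\<lambda>i. vnnz (column i A)) ` supp x) = vnnz (column k A)"
      by auto
    have xk: "x$k \<noteq> 0" using k by (simp add: supp_def)
    define X :: "rat^'n^'n" where "X = (\<chi> i j. if j = k then x$i else if i = j then 1 else 0)"
    have "\<forall>v. X *v v = 0 \<longrightarrow> v = 0"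
    proof (intro allI impI)
      fix v assume v0: "X *v v = 0"
      have c: "x$i * v$k + (if i = k then 0 else v$i) = 0" for i
      proof -
        have "(X *v v)$i = x$i * v$k + (if i = k then 0 else v$i)" unfolding X_def by (rule Xcomp)
        then show ?thesis using v0 by simp
      qed
      have "v$k = 0" using c[of k] xk by simp
      then show "v = 0" unfolding vec_eq_iff
      proof (intro allI)
        fix i show "v$i = 0 $ i"
        proof (cases "i = k")
          case True then show ?thesis using \<open>v$k = 0\<close> by simp
        next
          case False then show ?thesis using c[of i] \<open>v$k = 0\<close> by simp
        qed
      qed
    qed
    then have "inj ((*v) X)" using inj0 by blast
    then have "\<exists>B. B ** X = mat 1" using matrix_left_invertible_injective by blast
    then have "invertible X" using invertible_left_inverse by blast
    then have le: "nnz A \<le> nnz (A ** X)" using os unfolding optimally_sparse_def by blast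
    have colX: "column j (A ** X) = (if j = k then A *v x else column j A)" for j
    proof -
      have "column j X = (if j = k then x else axis j 1)"
        unfolding X_def by (auto simp: column_def axis_def vec_eq_iff)
      then show ?thesis by (simp add: col_mult axis_col)
    qed
    have "nnz (A ** X) = vnnz (A *v x) + (\<Sum>j\<in>UNIV-{k}. vnnz (column j A))"
      unfolding nnz_cols colX by (simp add: sum.remove[of UNIV k])
    moreover have "nnz A = vnnz (column k A) + (\<Sum>j\<in>UNIV-{k}. vnnz (column j A))"
      unfolding nnz_cols by (simp add: sum.remove[of UNIV k])
    ultimately show "vnnz (A *v x) \<ge> Max ((\<lambda>i. vnnz (column i A)) ` supp x)"
      using le kM by simp
  qed
next
  assume C: "\<forall>x :: rat ^ 'n. x \<noteq> 0 \<longrightarrow>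
       vnnz (A *v x) \<ge> Max ((\<lambda>i. vnnz (column i A)) ` supp x)"
  show "optimally_sparse A" unfolding optimally_sparse_def
  proof (intro allI impI)
    fix X :: "rat^'n^'n" assume "invertible X"
    then have "det X \<noteq> 0" by (simp add: invertible_det_nz)
    then obtain p where p: "p permutes UNIV" "\<forall>i. X$i$p i \<noteq> 0" using det_perm by blast
    have step: "vnnz (column (inv p j) A) \<le> vnnz (A *v column j X)" for j
    proof -
      have "X $ (inv p j) $ j \<noteq> 0" using p by (metis permutes_inverses(1))
      then have s: "inv p j \<in> supp (column j X)" and nz: "column j X \<noteq> 0"
        by (auto simp: supp_def column_def vec_eq_iff)
      have "vnnz (column (inv p j) A) \<le> Max ((\<lambda>i. vnnz (column i A)) ` supp (column j X))"
        using s by (intro Max_ge) auto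
      also have "\<dots> \<le> vnnz (A *v column j X)" using C nz by blast
      finally show ?thesis .
    qed
    have "nnz A = (\<Sum>j\<in>UNIV. vnnz (column (inv p j) A))"
      unfolding nnz_cols using sum.permute[OF permutes_inv[OF p(1)], of "\<lambda>i. vnnz (column i A)"]
      by (simp add: comp_def)
    also have "\<dots> \<le> (\<Sum>j\<in>UNIV. vnnz (A *v column j X))" by (rule sum_mono, rule step)
    also have "\<dots> = nnz (A ** X)" unfolding nnz_cols col_mult ..
    finally show "nnz A \<le> nnz (A ** X)" .
  qed
qed

end
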